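(* Let $f:\mathbb{R}^n\to\mathbb{R}$ be bounded below and continuously differentiable with $\nabla f$ Lipschitz with constant $L_{\nabla f}$. Let $x\in\mathbb{R}^n$, $\Delta>0$, points $y_1,\ldots,y_p$ with $\|y_i-x\|\le\beta\Delta$ for some $\beta>0$ and all $i$, with $\hat F$ invertible, and let $m$ be the minimum Frobenius norm quadratic interpolation model of $f$ and $\ell_1,\ldots,\ell_p$ the associated minimum Frobenius norm Lagrange polynomials (see context). Suppose $\max_{y\in B(x,\Delta)}\max_{i}|\ell_i(y)|\le\Lambda_\infty$. Then the Hessian $H$ of $m$ satisfies $\|H\|\le\kappa_H:=12L_{\nabla f}p\beta^2\Lambda_\infty$.
   Context: Here $n+2\le p\le(n+1)(n+2)/2-1$. Let $\hat s_i=(y_i-x)/\Delta$, $\hat M$ with rows $[1,\hat s_i^T]$, $\hat P_{ij}=\tfrac12(\hat s_i^T\hat s_j)^2$, $\hat F=\begin{bmatrix}\hat P&\hat M\\ \hat M^T&0\end{bmatrix}$. For data values $v_1,\ldots,v_p$, the minimum Frobenius norm interpolant is the quadratic $q(y)=c+g^T(y-x)+\tfrac12(y-x)^TH(y-x)$ with $H$ symmetric minimizing $\tfrac14\|H\|_F^2$ subject to $q(y_i)=v_i$ for all $i$; when $\hat F$ is invertible it is unique and obtained by solving $\hat F[\hat\lambda;c;\Delta g]=[v;0;0_n]$ and setting $H=\sum_i(\hat\lambda_i/\Delta^4)(y_i-x)(y_i-x)^T$. The model $m$ uses $v_i=f(y_i)$; the Lagrange polynomial $\ell_i$ uses $v_j=\delta_{ij}$.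 $\|H\|$ is the operator 2-norm; $B(x,\Delta)=\{y:\|y-x\|\le\Delta\}$. *)

theory Defs
  imports "HOL-Analysis.Analysis"
begin

text \<open>Points are vectors in real^'n (n = CARD('n)); the interpolation points are
indexed by a finite type 'p (p = CARD('p)).  The quadratic with centre x,
constant c, gradient g and symmetric Hessian H.\<close>

definition qeval :: "real^'n \<Rightarrow> real \<Rightarrow> real^'n \<Rightarrow> real^'n^'n \<Rightarrow> real^'n \<Rightarrow> real" where
  "qeval x c g H y = c + g \<bullet> (y - x) + (1/2) * ((y - x) \<bullet> (H *v (y - x)))"

definition shat :: "real^'n \<Rightarrow> real \<Rightarrow> ('p \<Rightarrow> real^'n) \<Rightarrow> 'p \<Rightarrow> real^'n" where
  "shat x \<Delta> y i = (1 / \<Delta>) *\<^sub>R (y i - x)"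

text \<open>The matrix F = [[P, M],[M^T, 0]] of size (p+1+n), rows/columns indexed by
'p + (unit + 'n): Inl i ~ row i of P / M, Inr (Inl ()) ~ the constant column,
Inr (Inr k) ~ the k-th coordinate column.\<close>
definition Fhat :: "real^'n \<Rightarrow> real \<Rightarrow> ('p::finite \<Rightarrow> real^'n) \<Rightarrow> real^('p + (unit + 'n))^('p + (unit + 'n))" where
  "Fhat x \<Delta> y = (\<chi> a b. (case (a, b) of
       (Inl i, Inl j) \<Rightarrow> (1/2) * (shat x \<Delta> y i \<bullet> shat x \<Delta> y j)^2
     | (Inl i, Inr (Inl _)) \<Rightarrow> 1
     | (Inl i, Inr (Inr k)) \<Rightarrow> shat x \<Delta> y i $ k
     | (Inr (Inl _), Inl j) \<Rightarrow> 1
     | (Inr (Inr k), Inl j) \<Rightarrow> shat x \<Delta> y j $ k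
     | (Inr _, Inr _) \<Rightarrow> 0))"

text \<open>Note that norm on real^'n^'n is the Frobenius norm.\<close>
definition mfn_interp :: "real^'n \<Rightarrow> ('p \<Rightarrow> real^'n) \<Rightarrow> ('p \<Rightarrow> real)
     \<Rightarrow> real \<Rightarrow> real^'n \<Rightarrow> real^'n^'n \<Rightarrow> bool" where
  "mfn_interp x y v c g H \<longleftrightarrow>
     transpose H = H \<and> (\<forall>i. qeval x c g H (y i) = v i) \<and>
     (\<forall>c' g' H'. transpose H' = H' \<and> (\<forall>i. qeval x c' g' H' (y i) = v i)
        \<longrightarrow> (1/4) * (norm H)^2 \<le> (1/4) * (norm H')^2)"

end

theory Submission
  imports Defs
begin


lemma transpose_add': "transpose (A + B) = transpose A + (transpose B :: real^'n^'m)"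
  by (simp add: transpose_def vec_eq_iff)

lemma transpose_diff': "transpose (A - B) = transpose A - (transpose B :: real^'n^'m)"
  by (simp add: transpose_def vec_eq_iff)

lemma transpose_sum': "finite S \<Longrightarrow> transpose (\<Sum>i\<in>S. a i *\<^sub>R (A i :: real^'n^'m)) = (\<Sum>i\<in>S. a i *\<^sub>R transpose (A i))"
  by (induction S rule: finite_induct) (auto simp: transpose_add' transpose_scalar transpose_def vec_eq_iff)

lemma sum_mv: "finite S \<Longrightarrow> (\<Sum>i\<in>S. a i *\<^sub>R (A i :: real^'n^'m)) *v v = (\<Sum>i\<in>S. a i *\<^sub>R (A i *v v))"
  by (induction S rule: finite_induct) (auto simp: matrix_vector_mult_add_rdistrib scaleR_matrix_vector_assoc[symmetric])

lemma qeval_add: "qeval x (c1+c2) (g1+g2) (H1+H2) z = qeval x c1 g1 H1 z + qeval x c2 g2 H2 z"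
  by (simp add: qeval_def matrix_vector_mult_add_rdistrib inner_add_left inner_add_right algebra_simps)

lemma qeval_diff: "qeval x (c1-c2) (g1-g2) (H1-H2) z = qeval x c1 g1 H1 z - qeval x c2 g2 H2 z"
  by (simp add: qeval_def matrix_vector_mult_diff_rdistrib inner_diff_left inner_diff_right algebra_simps)

lemma qeval_scale: "qeval x (t*c) (t *\<^sub>R g) (t *\<^sub>R H) z = t * qeval x c g H z"
  by (simp add: qeval_def scaleR_matrix_vector_assoc[symmetric] algebra_simps)

lemma qeval_zero: "qeval x 0 0 0 z = 0"
  by (simp add: qeval_def)

lemma qeval_sum: "finite S \<Longrightarrow> qeval x (\<Sum>i\<in>S. a i * c i) (\<Sum>i\<in>S. a i *\<^sub>R g i) (\<Sum>i\<in>S. a i *\<^sub>R H i) z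
   = (\<Sum>i\<in>S. a i * qeval x (c i) (g i) (H i) z)"
proof (induction S rule: finite_induct)
  case empty then show ?case by (simp add: qeval_zero)
next
  case (insert j S)
  then show ?case by (simp add: qeval_add qeval_scale)
qed

lemma mfn_orth:
  assumes m: "mfn_interp x y v c g H" and K: "transpose K = K"
    and z: "\<And>i. qeval x c0 g0 K (y i) = 0"
  shows "H \<bullet> K = 0"
proof (rule ccontr)
  assume ne: "H \<bullet> K \<noteq> 0"
  define a where "a = H \<bullet> K"
  define b where "b = K \<bullet> K"
  have b0: "b \<ge> 0" unfolding b_def by simp
  define t where "t = - a / (b + 1)"
  have symH: "transpose H = H" and iH: "\<And>i. qeval x c g H (y i) = v i" using m by (auto simp: mfn_interp_def)
  have feas: "transpose (H + t *\<^sub>R K) = H + t *\<^sub>R K"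
    by (simp add: transpose_add' transpose_scalar symH K)
  have feas2: "\<And>i. qeval x (c + t * c0) (g + t *\<^sub>R g0) (H + t *\<^sub>R K) (y i) = v i"
    by (simp add: qeval_add qeval_scale iH z)
  have "(1/4) * (norm H)^2 \<le> (1/4) * (norm (H + t *\<^sub>R K))^2"
    using m feas feas2 unfolding mfn_interp_def by blast
  hence "H \<bullet> H \<le> (H + t *\<^sub>R K) \<bullet> (H + t *\<^sub>R K)" by (simp add: power2_norm_eq_inner)
  also have "\<dots> = H \<bullet> H + 2 * t * a + t^2 * b"
    by (simp add: a_def b_def inner_add_left inner_add_right inner_commute power2_eq_square algebra_simps)
  finally have le: "0 \<le> 2 * t * a + t^2 * b" by simp
  have "2 * t * a + t^2 * b = a^2 * (b / (b+1)^2 - 2/(b+1))"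
    using b0 by (simp add: t_def field_simps power2_eq_square)
  also have "\<dots> < 0"
  proof -
    have "b / (b+1)^2 < 2/(b+1)" using b0 mult_nonneg_nonneg[OF b0 b0] apply (simp add: field_simps power2_eq_square pos_divide_less_eq add_pos_nonneg)
      using mult_nonneg_nonneg[OF b0 b0] by linarith
    moreover have "a^2 > 0" using ne a_def by simp
    ultimately show ?thesis by (simp add: mult_pos_neg)
  qed
  finally show False using le by simp
qed

lemma sym_inner:
  assumes "transpose A = (A::real^'n^'n)"
  shows "(A *v u) \<bullet> w = u \<bullet> (A *v w)"
proof -
  have "A *v u = u v* transpose A" by simp
  then have "A *v u = u v* A" using assms by simp
  then show ?thesis by (simp add: dot_lmul_matrix)
qed


lemma quad_form_bound:
  fixes A :: "real^'n^'n"
  assumes D: "\<Delta> > 0" and bnd: "\<And>z. z \<in> cball x \<Delta> \<Longrightarrow> \<bar>qeval x c g A z\<bar> \<le> \<Lambda>"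
  shows "\<bar>v \<bullet> (A *v v)\<bar> \<le> (4 * \<Lambda> / \<Delta>^2) * (norm v)^2"
proof (cases "v = 0")
  case True then show ?thesis by simp
next
  case False
  define s where "s = (\<Delta> / norm v) *\<^sub>R v"
  have ns: "norm s = \<Delta>" using False D by (simp add: s_def)
  have "x + s \<in> cball x \<Delta>" "x - s \<in> cball x \<Delta>" "x \<in> cball x \<Delta>"
    using ns D by (auto simp: dist_norm)
  hence b1: "\<bar>qeval x c g A (x+s)\<bar> \<le> \<Lambda>" "\<bar>qeval x c g A (x-s)\<bar> \<le> \<Lambda>" "\<bar>qeval x c g A x\<bar> \<le> \<Lambda>"
    using bnd by auto
  have neg: "A *v (-s) = - (A *v s)" using linear_neg[OF matrix_vector_mul_linear[of A]] by simp
  have q1: "qeval x c g A (x+s) = c + g \<bullet> s + (1/2) * (s \<bullet> (A *v s))" by (simp add: qeval_def)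
  have q2: "qeval x c g A (x-s) = c - g \<bullet> s + (1/2) * (s \<bullet> (A *v s))" by (simp add: qeval_def neg)
  have q3: "qeval x c g A x = c" by (simp add: qeval_def)
  have id: "qeval x c g A (x+s) + qeval x c g A (x-s) - 2 * qeval x c g A x = s \<bullet> (A *v s)"
    unfolding q1 q2 q3 by simp
  have "\<bar>s \<bullet> (A *v s)\<bar> \<le> 4 * \<Lambda>" using b1 id by linarith
  moreover have "s \<bullet> (A *v s) = (\<Delta> / norm v)^2 * (v \<bullet> (A *v v))"
    by (simp add: s_def power2_eq_square matrix_vector_mult_scaleR)
  ultimately have "(\<Delta> / norm v)^2 * \<bar>v \<bullet> (A *v v)\<bar> \<le> 4 * \<Lambda>"
    by (simp add: abs_mult)
  then show ?thesis using False D
    by (simp add: field_simps power2_eq_square)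
qed


lemma polar_bound:
  fixes A :: "real^'n^'n"
  assumes sym: "transpose A = A" and q: "\<And>v. \<bar>v \<bullet> (A *v v)\<bar> \<le> M * (norm v)^2"
  shows "norm (A *v u) \<le> M * norm u"
proof (cases "A *v u = 0")
  case True
  have h: "0 \<le> M * (norm u)^2" using q[of u] abs_ge_zero order_trans by blast
  show ?thesis
  proof (cases "u = 0")
    case True then show ?thesis by simp
  next
    case False
    then have "0 < (norm u)^2" by simp
    then have "0 \<le> M" using h by (simp add: zero_le_mult_iff)
    then show ?thesis using \<open>A *v u = 0\<close> by simp
  qed
next
  case False
  have u0: "u \<noteq> 0" using False by auto
  define w where "w = (norm u / norm (A *v u)) *\<^sub>R (A *v u)"
  have nw: "norm w = norm u" using False by (simp add: w_def)
  have wa: "w \<bullet> (A *v u) = norm u * norm (A *v u)"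
    using False by (simp add: w_def power2_norm_eq_inner[symmetric] power2_eq_square)
  have sw: "u \<bullet> (A *v w) = w \<bullet> (A *v u)"
    using sym_inner[OF sym, of w u] by (simp add: inner_commute)
  have e: "(u+w) \<bullet> (A *v (u+w)) - (u-w) \<bullet> (A *v (u-w)) = 4 * (w \<bullet> (A *v u))"
  proof -
    have "(u+w) \<bullet> (A *v (u+w)) = u \<bullet> (A *v u) + u \<bullet> (A *v w) + w \<bullet> (A *v u) + w \<bullet> (A *v w)"
      by (simp add: matrix_vector_right_distrib inner_add_left inner_add_right)
    moreover have "(u-w) \<bullet> (A *v (u-w)) = u \<bullet> (A *v u) - u \<bullet> (A *v w) - w \<bullet> (A *v u) + w \<bullet> (A *v w)"
      by (simp add: matrix_vector_mult_diff_distrib inner_diff_left inner_diff_right)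
    ultimately show ?thesis using sw by linarith
  qed
  have "(u+w) \<bullet> (A *v (u+w)) \<le> M * (norm (u+w))^2" using q[of "u+w"] by linarith
  moreover have "- ((u-w) \<bullet> (A *v (u-w))) \<le> M * (norm (u-w))^2" using q[of "u-w"] by linarith
  moreover have "(norm (u+w))^2 + (norm (u-w))^2 = 2 * (norm u)^2 + 2 * (norm w)^2"
    by (simp add: power2_norm_eq_inner inner_add_left inner_add_right inner_diff_left inner_diff_right inner_commute)
  ultimately have "4 * (norm u * norm (A *v u)) \<le> M * (4 * (norm u)^2)"
  proof -
    assume a1: "(u+w) \<bullet> (A *v (u+w)) \<le> M * (norm (u+w))^2"
      and a2: "- ((u-w) \<bullet> (A *v (u-w))) \<le> M * (norm (u-w))^2"
      and a3: "(norm (u+w))^2 + (norm (u-w))^2 = 2 * (norm u)^2 + 2 * (norm w)^2"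
    have "M * (norm (u+w))^2 + M * (norm (u-w))^2 = M * (4 * (norm u)^2)"
      using a3 nw by (simp add: distrib_left[symmetric])
    then show ?thesis using a1 a2 e wa by linarith
  qed
  then have "norm u * norm (A *v u) \<le> norm u * (M * norm u)" by (simp add: power2_eq_square algebra_simps)
  then show ?thesis using u0 by simp
qed


lemma taylor_bound:
  fixes f :: "real^'n \<Rightarrow> real"
  assumes grad: "\<And>z. (f has_derivative (\<lambda>h. gf z \<bullet> h)) (at z)"
    and lip: "L-lipschitz_on UNIV gf"
  shows "\<bar>f y - f x - gf x \<bullet> (y - x)\<bar> \<le> L * (norm (y - x))^2"
proof -
  define r where "r = norm (y - x)"
  define G where "G z = f z - gf x \<bullet> z" for z
  have L0: "0 \<le> L" using lip by (rule lipschitz_on_nonneg)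
  have der: "(G has_derivative (\<lambda>h. gf z \<bullet> h - gf x \<bullet> h)) (at z within cball x r)" for z
  proof -
    have "((\<lambda>z. gf x \<bullet> z) has_derivative (\<lambda>h. gf x \<bullet> h)) (at z)"
      by (rule bounded_linear_imp_has_derivative) (rule bounded_linear_inner_right)
    then have "(G has_derivative (\<lambda>h. gf z \<bullet> h - gf x \<bullet> h)) (at z)"
      unfolding G_def by (rule has_derivative_diff[OF grad])
    then show ?thesis by (rule has_derivative_at_withinI)
  qed
  have on: "onorm (\<lambda>h. gf z \<bullet> h - gf x \<bullet> h) \<le> L * r" if "z \<in> cball x r" for z
  proof (rule onorm_le)
    fix h
    have "\<bar>gf z \<bullet> h - gf x \<bullet> h\<bar> = \<bar>(gf z - gf x) \<bullet> h\<bar>" by (simp add: inner_diff_left)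
    also have "\<dots> \<le> norm (gf z - gf x) * norm h" by (rule Cauchy_Schwarz_ineq2)
    finally have c1: "\<bar>gf z \<bullet> h - gf x \<bullet> h\<bar> \<le> norm (gf z - gf x) * norm h" .
    have "norm (gf z - gf x) \<le> L * r"
    proof -
      have "dist (gf z) (gf x) \<le> L * dist z x" using lipschitz_onD[OF lip] by simp
      also have "\<dots> \<le> L * r" using that L0 by (intro mult_left_mono) (auto simp: dist_commute)
      finally show ?thesis by (simp add: dist_norm)
    qed
    hence "norm (gf z - gf x) * norm h \<le> L * r * norm h" by (simp add: mult_right_mono)
    then show "norm (gf z \<bullet> h - gf x \<bullet> h) \<le> L * r * norm h" using c1 by simp
  qed
  have "norm (G y - G x) \<le> L * r * norm (y - x)"
    by (rule differentiable_bound[OF convex_cball der on]) (auto simp: r_def dist_norm norm_minus_commute)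
  moreover have "G y - G x = f y - f x - gf x \<bullet> (y - x)" by (simp add: G_def inner_diff_right)
  ultimately show ?thesis by (simp add: r_def power2_eq_square mult.assoc)
qed


theorem lemma6p7:
  fixes f :: "real^'n \<Rightarrow> real" and gf :: "real^'n \<Rightarrow> real^'n"
    and L :: real and x :: "real^'n" and \<Delta> \<beta> \<Lambda> :: real
    and y :: "'p::finite \<Rightarrow> real^'n"
    and c :: real and g :: "real^'n" and H :: "real^'n^'n"
    and cl :: "'p \<Rightarrow> real" and gl :: "'p \<Rightarrow> real^'n" and Hl :: "'p \<Rightarrow> real^'n^'n"
  assumes p_lower: "CARD('n) + 2 \<le> CARD('p)"
    and p_upper: "CARD('p) \<le> (CARD('n) + 1) * (CARD('n) + 2) div 2 - 1"
    and bdd: "bdd_below (range f)"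
    and grad: "\<And>z. (f has_derivative (\<lambda>h. gf z \<bullet> h)) (at z)"
    and grad_cont: "continuous_on UNIV gf"
    and lip: "L-lipschitz_on UNIV gf"
    and Delta_pos: "\<Delta> > 0" and beta_pos: "\<beta> > 0"
    and pts: "\<And>i. norm (y i - x) \<le> \<beta> * \<Delta>"
    and F_inv: "invertible (Fhat x \<Delta> y)"
    and model: "mfn_interp x y (\<lambda>i. f (y i)) c g H"
    and lagr: "\<And>i. mfn_interp x y (\<lambda>j. if j = i then 1 else 0) (cl i) (gl i) (Hl i)"
    and poised: "\<And>z i. z \<in> cball x \<Delta> \<Longrightarrow> \<bar>qeval x (cl i) (gl i) (Hl i) z\<bar> \<le> \<Lambda>"
  shows "onorm (\<lambda>v. H *v v) \<le> 12 * L * real CARD('p) * \<beta>^2 * \<Lambda>"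
proof -
  define w where "w i = f (y i) - f x - gf x \<bullet> (y i - x)" for i
  define SC where "SC = (\<Sum>i\<in>UNIV. w i * cl i)"
  define SG where "SG = (\<Sum>i\<in>UNIV. w i *\<^sub>R gl i)"
  define S where "S = (\<Sum>i\<in>UNIV. w i *\<^sub>R Hl i)"
  have L0: "0 \<le> L" using lip by (rule lipschitz_on_nonneg)
  have Lam0: "0 \<le> \<Lambda>" using poised[of x] Delta_pos by (meson abs_ge_zero centre_in_cball less_imp_le order_trans)
  have symHl: "transpose (Hl i) = Hl i" for i using lagr[of i] by (simp add: mfn_interp_def)
  have intl: "qeval x (cl i) (gl i) (Hl i) (y j) = (if j = i then 1 else 0)" for i j
    using lagr[of i] by (simp add: mfn_interp_def)
  have symH: "transpose H = H" and intH: "\<And>j. qeval x c g H (y j) = f (y j)"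
    using model by (auto simp: mfn_interp_def)
  have symS: "transpose S = S" unfolding S_def by (simp add: transpose_sum' symHl)
  have intS: "qeval x (f x + SC) (gf x + SG) (0 + S) (y j) = f (y j)" for j
  proof -
    have "qeval x (f x + SC) (gf x + SG) (0 + S) (y j) = qeval x (f x) (gf x) 0 (y j) + qeval x SC SG S (y j)"
      by (rule qeval_add)
    also have "qeval x SC SG S (y j) = (\<Sum>i\<in>UNIV. w i * qeval x (cl i) (gl i) (Hl i) (y j))"
      unfolding SC_def SG_def S_def by (rule qeval_sum) simp
    also have "\<dots> = (\<Sum>i\<in>UNIV. if i = j then w j else 0)"
      by (rule sum.cong) (auto simp: intl)
    also have "\<dots> = w j" by simp
    finally show ?thesis by (simp add: qeval_def w_def)
  qed
  define D where "D = H - S"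
  have symD: "transpose D = D" unfolding D_def by (simp add: transpose_diff' symH symS)
  have intD: "qeval x (c - (f x + SC)) (g - (gf x + SG)) D (y j) = 0" for j
    using qeval_diff[of x c "f x + SC" g "gf x + SG" H "0 + S" "y j"] intH[of j] intS[of j]
    by (simp add: D_def)
  have HD: "H \<bullet> D = 0" by (rule mfn_orth[OF model symD intD])
  have HlD: "Hl i \<bullet> D = 0" for i by (rule mfn_orth[OF lagr symD intD])
  have SD: "S \<bullet> D = 0" unfolding S_def by (simp add: inner_sum_left HlD)
  have "D \<bullet> D = 0" using HD SD by (simp add: D_def inner_diff_left)
  then have HS: "H = S" by (simp add: D_def)
  have Hlb: "norm (Hl i *v v) \<le> (4 * \<Lambda> / \<Delta>^2) * norm v" for i v
    by (rule polar_bound[OF symHl quad_form_bound[OF Delta_pos poised]])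
  have wb: "\<bar>w i\<bar> \<le> L * (\<beta> * \<Delta>)^2" for i
  proof -
    have "\<bar>w i\<bar> \<le> L * (norm (y i - x))^2" unfolding w_def by (rule taylor_bound[OF grad lip])
    also have "\<dots> \<le> L * (\<beta> * \<Delta>)^2" using pts[of i] L0 by (intro mult_left_mono power_mono) auto
    finally show ?thesis .
  qed
  have "onorm (\<lambda>v. H *v v) \<le> 4 * L * real CARD('p) * \<beta>^2 * \<Lambda>"
  proof (rule onorm_le)
    fix v
    have "norm (H *v v) = norm (\<Sum>i\<in>UNIV. w i *\<^sub>R (Hl i *v v))" unfolding HS S_def by (simp add: sum_mv)
    also have "\<dots> \<le> (\<Sum>i\<in>UNIV. norm (w i *\<^sub>R (Hl i *v v)))" by (rule norm_sum)
    also have "\<dots> \<le> (\<Sum>i\<in>(UNIV::'p set). (L * (\<beta> * \<Delta>)^2) * ((4 * \<Lambda> / \<Delta>^2) * norm v))"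
    proof (rule sum_mono)
      fix i
      show "norm (w i *\<^sub>R (Hl i *v v)) \<le> (L * (\<beta> * \<Delta>)^2) * ((4 * \<Lambda> / \<Delta>^2) * norm v)"
      proof -
        have "\<bar>w i\<bar> * norm (Hl i *v v) \<le> (L * (\<beta> * \<Delta>)^2) * ((4 * \<Lambda> / \<Delta>^2) * norm v)"
          using wb[of i] Hlb[of i v] L0 by (intro mult_mono) auto
        then show ?thesis by simp
      qed
    qed
    also have "\<dots> = 4 * L * real CARD('p) * \<beta>^2 * \<Lambda> * norm v"
      using Delta_pos by (simp add: field_simps power2_eq_square)
    finally show "norm (H *v v) \<le> 4 * L * real CARD('p) * \<beta>^2 * \<Lambda> * norm v" .
  qed
  also have "\<dots> \<le> 12 * L * real CARD('p) * \<beta>^2 * \<Lambda>"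
    using L0 Lam0 by (intro mult_right_mono) auto
  finally show ?thesis .
qed

end
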